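(* With the notation of the context, let $\iota:G\rtimes M_G\to \mathrm{GL}(V)$ be a finite-dimensional complex representation, extended to an algebra morphism $\iota:\mathbb{Z}[G\rtimes M_G]\to\mathrm{End}(V)$, and define $\widetilde{\rho_V}:\mathcal{G}\to \mathrm{GL}(V^{\oplus N})$ by applying $\iota$ entrywise to the matrix $\widetilde{\rho_G}(g)$. Then $\widetilde{\rho_V}$ is a $\mathbb{C}$-linear representation of $\mathcal{G}$. Moreover: (i) if $\iota(m)\notin\iota(\mathbb{Z}[G])$ for every $m\neq 1$ in $M_G$, then $\mathrm{Ker}(\widetilde{\rho_V})$ is a subgroup of $K_G$; (ii) if furthermore the restriction $\iota:\mathbb{Z}[G]\to\mathrm{End}(V)$ is injective, then $\mathrm{Ker}(\widetilde{\rho_V})=\mathrm{Ker}(\widetilde{\rho_G})$.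
   Context: Setting: $\mathcal{G}$ is a group isotopically acting on a based manifold $(X,x)$ (a homomorphism to the group of homeomorphisms fixing $x$ modulo isotopies fixing $x$); $N\triangleleft\pi_1(X,x)$ is $\mathcal{G}$-stable, $G=\pi_1(X,x)/N$, $X_G$ the associated regular cover, $M_G$ and $K_G$ the image and kernel of the induced map $\mathcal{G}\to\mathrm{Aut}(G)$, $f\mapsto f_*$. Each $f$ lifts to $f_G$ acting on $H_*(X_G,\mathbb{Z})$ with $f_G(g\cdot v)=f_*(g)f_G(v)$. Assume $H_*(X_G,\mathbb{Z})$ is a free $\mathbb{Z}[G]$-module with basis $\mathcal{B}=\{e_1,\dots,e_N\}$; $\mathrm{Mat}_{\mathcal{B}}(f)$ has $(i,j)$ entry $a_{ij}^*$ where $a_{ij}$ is the coefficient of $e_i$ in $f(e_j)$ and $*$ is the anti-involution $g\mapsto g^{-1}$. The representation $\widetilde{\rho_G}:\mathcal{G}\to\mathrm{GL}_N(\mathbb{Z}[G\rtimes M_G])$ is $\widetilde{\rho_G}(f)=\mathrm{Mat}_{\mathcal{B}}(f_G)(f_*I_N)$, with $f_*I_N$ the scalar diagonal matrix with entries $f_*\in M_G$; $\rho_G$ is its restriction to $K_G$, valued in $\mathrm{GL}_N(\mathbb{Z}[G])$. *)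

theory Defs
  imports "HOL-Algebra.Group" "HOL-Algebra.Coset" "HOL-Algebra.Bij" "Jordan_Normal_Form.Matrix"
begin

text \<open>Elements are pairs (g, m) with g in G and m in M (an automorphism of G,
  represented as an extensional function on carrier G). An element g of G is identified with (g, id),
  an element m of M with (1, m).\<close>

definition sdprod :: "('a, 'b) monoid_scheme \<Rightarrow> ('a \<Rightarrow> 'a) set \<Rightarrow> ('a \<times> ('a \<Rightarrow> 'a)) monoid" where
  "sdprod G M =
    \<lparr>carrier = carrier G \<times> M,
     Group.monoid.mult = (\<lambda>(g, m) (g', m'). (g \<otimes>\<^bsub>G\<^esub> m g', compose (carrier G) m m')),
     Group.monoid.one = (\<one>\<^bsub>G\<^esub>, (\<lambda>x\<in>carrier G. x))\<rparr>"

text \<open>Elements of Z[H]: finitely supported functions carrier H \<rightarrow> int (zero outside carrier H).\<close>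

definition gr_supp :: "('h, 'b) monoid_scheme \<Rightarrow> ('h \<Rightarrow> int) \<Rightarrow> 'h set" where
  "gr_supp H a = {h \<in> carrier H. a h \<noteq> 0}"

definition gr_elem :: "('h, 'b) monoid_scheme \<Rightarrow> ('h \<Rightarrow> int) \<Rightarrow> bool" where
  "gr_elem H a \<longleftrightarrow> finite (gr_supp H a) \<and> (\<forall>h. h \<notin> carrier H \<longrightarrow> a h = 0)"

definition gr_mult :: "('h, 'b) monoid_scheme \<Rightarrow> ('h \<Rightarrow> int) \<Rightarrow> ('h \<Rightarrow> int) \<Rightarrow> ('h \<Rightarrow> int)" where
  "gr_mult H a b = (\<lambda>h. if h \<in> carrier H
      then (\<Sum>k\<in>gr_supp H a. a k * b (inv\<^bsub>H\<^esub> k \<otimes>\<^bsub>H\<^esub> h)) else 0)"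

definition gr_delta :: "('h, 'b) monoid_scheme \<Rightarrow> 'h \<Rightarrow> ('h \<Rightarrow> int)" where
  "gr_delta H x = (\<lambda>h. if h = x then 1 else 0)"

section \<open>N x N matrices over Z[H] (indices 0..N-1, zero outside)\<close>

type_synonym 'h grmat = "nat \<Rightarrow> nat \<Rightarrow> ('h \<Rightarrow> int)"

definition gr_mat_mult :: "('h, 'b) monoid_scheme \<Rightarrow> nat \<Rightarrow> 'h grmat \<Rightarrow> 'h grmat \<Rightarrow> 'h grmat" where
  "gr_mat_mult H N A B = (\<lambda>i j. if i < N \<and> j < N
      then (\<lambda>h. \<Sum>k<N. gr_mult H (A i k) (B k j) h) else (\<lambda>_. 0))"

definition gr_mat_one :: "('h, 'b) monoid_scheme \<Rightarrow> nat \<Rightarrow> 'h grmat" where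
  "gr_mat_one H N = (\<lambda>i j. if i < N \<and> j < N \<and> i = j then gr_delta H \<one>\<^bsub>H\<^esub> else (\<lambda>_. 0))"

text \<open>rhoGt: f \<mapsto> Mat(f_G) \<cdot> (f_* I_N), where f_* I_N is the scalar matrix with
  entries the group-ring element [(1, f_*)] of Z[G \<rtimes> M_G].\<close>
definition rhoGt ::
  "('a, 'b) monoid_scheme \<Rightarrow> ('a \<times> ('a \<Rightarrow> 'a)) monoid \<Rightarrow> nat \<Rightarrow> ('g \<Rightarrow> 'a \<Rightarrow> 'a)
   \<Rightarrow> ('g \<Rightarrow> ('a \<times> ('a \<Rightarrow> 'a)) grmat) \<Rightarrow> 'g \<Rightarrow> ('a \<times> ('a \<Rightarrow> 'a)) grmat" where
  "rhoGt G H N phi Mat f = (\<lambda>i j. if i < N \<and> j < N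
      then gr_mult H (Mat f i j) (gr_delta H (\<one>\<^bsub>G\<^esub>, phi f)) else (\<lambda>_. 0))"

definition iota_ext :: "('h, 'b) monoid_scheme \<Rightarrow> nat \<Rightarrow> ('h \<Rightarrow> complex mat) \<Rightarrow> ('h \<Rightarrow> int) \<Rightarrow> complex mat" where
  "iota_ext H d \<iota> a = mat d d (\<lambda>(r, c). \<Sum>h\<in>gr_supp H a. of_int (a h) * (\<iota> h $$ (r, c)))"

text \<open>Entrywise application of iota to an N x N matrix over Z[H], giving an
  endomorphism of V^N (V = C^d), as an (N d) x (N d) block matrix.\<close>
definition iota_block :: "('h, 'b) monoid_scheme \<Rightarrow> nat \<Rightarrow> nat \<Rightarrow> ('h \<Rightarrow> complex mat) \<Rightarrow> 'h grmat \<Rightarrow> complex mat" where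
  "iota_block H N d \<iota> A = mat (N * d) (N * d)
      (\<lambda>(r, c). iota_ext H d \<iota> (A (r div d) (c div d)) $$ (r mod d, c mod d))"

end

theory Submission
  imports Defs
begin

lemma auto_mult:
  "m \<in> auto G \<Longrightarrow> m' \<in> auto G \<Longrightarrow> m \<otimes>\<^bsub>AutoGroup G\<^esub> m' = compose (carrier G) m m'"
  by (simp add: AutoGroup_def BijGroup_def auto_def)

lemma auto_one: "\<one>\<^bsub>AutoGroup G\<^esub> = (\<lambda>x\<in>carrier G. x)"
  by (simp add: AutoGroup_def BijGroup_def)

lemma auto_carrier: "carrier (AutoGroup G) = auto G"
  by (simp add: AutoGroup_def BijGroup_def)

lemma sdprod_group:
  assumes G: "group G" and M: "subgroup M (AutoGroup G)"
  shows "group (sdprod G M)"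
proof -
  interpret G: group G by fact
  interpret A: group "AutoGroup G" by (rule G.AutoGroup)
  have Ma: "m \<in> auto G" if "m \<in> M" for m
    using subgroup.subset[OF M] that auto_carrier by blast
  have hom: "m \<in> hom G G" if "m \<in> M" for m using Ma[OF that] by (simp add: auto_def)
  have mc: "m x \<in> carrier G" if "m \<in> M" "x \<in> carrier G" for m x
    using hom[OF that(1)] that(2) by (simp add: hom_def Pi_def)
  have mm: "m (x \<otimes>\<^bsub>G\<^esub> y) = m x \<otimes>\<^bsub>G\<^esub> m y" if "m \<in> M" "x \<in> carrier G" "y \<in> carrier G" for m x y
    using hom[OF that(1)] that(2,3) by (simp add: hom_def)
  have cM: "compose (carrier G) m m' \<in> M" if "m \<in> M" "m' \<in> M" for m m'
    using subgroup.m_closed[OF M that] auto_mult[OF Ma[OF that(1)] Ma[OF that(2)]] by simp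
  have oneM: "(\<lambda>x\<in>carrier G. x) \<in> M" using subgroup.one_closed[OF M] auto_one by metis
  have ceq: "compose (carrier G) m m' x = m (m' x)" if "x \<in> carrier G" for m m' x
    using that by (simp add: compose_def)
  show ?thesis
  proof (rule groupI)
    fix x y assume "x \<in> carrier (sdprod G M)" "y \<in> carrier (sdprod G M)"
    then show "x \<otimes>\<^bsub>sdprod G M\<^esub> y \<in> carrier (sdprod G M)"
      by (auto simp: sdprod_def mc cM)
  next
    show "\<one>\<^bsub>sdprod G M\<^esub> \<in> carrier (sdprod G M)" by (simp add: sdprod_def oneM)
  next
    fix x y z assume xyz: "x \<in> carrier (sdprod G M)" "y \<in> carrier (sdprod G M)" "z \<in> carrier (sdprod G M)"
    obtain g m where x: "x = (g, m)" "g \<in> carrier G" "m \<in> M" using xyz(1) by (auto simp: sdprod_def)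
    obtain g' m' where y: "y = (g', m')" "g' \<in> carrier G" "m' \<in> M" using xyz(2) by (auto simp: sdprod_def)
    obtain g'' m'' where z: "z = (g'', m'')" "g'' \<in> carrier G" "m'' \<in> M" using xyz(3) by (auto simp: sdprod_def)
    have c1: "compose (carrier G) (compose (carrier G) m m') m'' = compose (carrier G) m (compose (carrier G) m' m'')"
      using A.m_assoc[of m m' m''] Ma x y z auto_carrier auto_mult cM by (metis)
    show "x \<otimes>\<^bsub>sdprod G M\<^esub> y \<otimes>\<^bsub>sdprod G M\<^esub> z = x \<otimes>\<^bsub>sdprod G M\<^esub> (y \<otimes>\<^bsub>sdprod G M\<^esub> z)"
      using x y z by (simp add: sdprod_def c1 ceq mm mc G.m_assoc)
  next
    fix x assume "x \<in> carrier (sdprod G M)"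
    then obtain g m where x: "x = (g, m)" "g \<in> carrier G" "m \<in> M" by (auto simp: sdprod_def)
    have "compose (carrier G) (\<lambda>x\<in>carrier G. x) m = m"
      using A.l_one[of m] Ma[OF x(3)] auto_carrier auto_mult[OF _ Ma[OF x(3)]] auto_one oneM Ma by metis
    then show "\<one>\<^bsub>sdprod G M\<^esub> \<otimes>\<^bsub>sdprod G M\<^esub> x = x" using x by (simp add: sdprod_def)
  next
    fix x assume "x \<in> carrier (sdprod G M)"
    then obtain g m where x: "x = (g, m)" "g \<in> carrier G" "m \<in> M" by (auto simp: sdprod_def)
    define m' where "m' = inv\<^bsub>AutoGroup G\<^esub> m"
    have m'M: "m' \<in> M" using subgroup.m_inv_closed[OF M x(3)] m'_def by simp
    have cm: "compose (carrier G) m' m = (\<lambda>x\<in>carrier G. x)"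
      using A.l_inv[of m] Ma[OF x(3)] Ma[OF m'M] auto_carrier auto_mult auto_one m'_def by metis
    have "m' (inv\<^bsub>G\<^esub> g) \<otimes>\<^bsub>G\<^esub> m' g = \<one>\<^bsub>G\<^esub>"
    proof -
      have "m' (inv\<^bsub>G\<^esub> g) \<otimes>\<^bsub>G\<^esub> m' g = m' \<one>\<^bsub>G\<^esub>" using mm[OF m'M, of "inv\<^bsub>G\<^esub> g" g] x by simp
      also have "\<dots> = \<one>\<^bsub>G\<^esub>" using hom_one[OF hom[OF m'M]] G.group_axioms by (simp add: G.is_monoid group_def)
      finally show ?thesis .
    qed
    then have "(m' (inv\<^bsub>G\<^esub> g), m') \<otimes>\<^bsub>sdprod G M\<^esub> x = \<one>\<^bsub>sdprod G M\<^esub>"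
      using x by (simp add: sdprod_def cm)
    moreover have "(m' (inv\<^bsub>G\<^esub> g), m') \<in> carrier (sdprod G M)" using m'M x mc by (simp add: sdprod_def)
    ultimately show "\<exists>y\<in>carrier (sdprod G M). y \<otimes>\<^bsub>sdprod G M\<^esub> x = \<one>\<^bsub>sdprod G M\<^esub>" by blast
  qed
qed


lemma mult_entry:
  assumes "A \<in> carrier_mat n m" "B \<in> carrier_mat m p" "i < n" "j < p"
  shows "(A * B) $$ (i,j) = (\<Sum>t<m. A $$ (i,t) * B $$ (t,j))"
  using assms by (auto simp: scalar_prod_def atLeast0LessThan intro!: sum.cong)

lemma iota_ext_entry:
  "r < d \<Longrightarrow> c < d \<Longrightarrow> iota_ext H d \<iota> a $$ (r,c) = (\<Sum>h\<in>gr_supp H a. of_int (a h) * \<iota> h $$ (r,c))"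
  by (simp add: iota_ext_def)

lemma iota_ext_carrier: "iota_ext H d \<iota> a \<in> carrier_mat d d"
  by (simp add: iota_ext_def)

lemma supp_sum_gen:
  fixes X :: "'h \<Rightarrow> complex"
  assumes "\<forall>h. h \<notin> carrier H \<longrightarrow> a h = 0" "finite T" "gr_supp H a \<subseteq> T"
  shows "(\<Sum>h\<in>gr_supp H a. of_int (a h) * X h) = (\<Sum>h\<in>T. of_int (a h) * X h)"
  by (rule sum.mono_neutral_left) (use assms in \<open>auto simp: gr_supp_def\<close>)

lemma iota_ext_entry_gen:
  assumes "\<forall>h. h \<notin> carrier H \<longrightarrow> a h = 0" "finite T" "gr_supp H a \<subseteq> T" "r < d" "c < d"
  shows "iota_ext H d \<iota> a $$ (r,c) = (\<Sum>h\<in>T. of_int (a h) * \<iota> h $$ (r,c))"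
  using supp_sum_gen[OF assms(1-3)] iota_ext_entry[OF assms(4,5), of H \<iota> a] by simp

lemma supp_carrier: "gr_supp H a \<subseteq> carrier H" by (auto simp: gr_supp_def)

lemma supp_mult:
  fixes H :: "('h,'b) monoid_scheme" (structure)
  assumes H: "group H" and b: "gr_elem H b"
  shows "gr_supp H (gr_mult H a b) \<subseteq> (\<lambda>(k,h). k \<otimes>\<^bsub>H\<^esub> h) ` (gr_supp H a \<times> gr_supp H b)"
proof
  interpret group H by fact
  fix h assume "h \<in> gr_supp H (gr_mult H a b)"
  then have h: "h \<in> carrier H" and ne: "(\<Sum>k\<in>gr_supp H a. a k * b (inv k \<otimes> h)) \<noteq> 0"
    by (auto simp: gr_supp_def gr_mult_def)
  then obtain k where k: "k \<in> gr_supp H a" "a k * b (inv k \<otimes> h) \<noteq> 0"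
    by (meson sum.neutral)
  have kc: "k \<in> carrier H" using k(1) by (auto simp: gr_supp_def)
  have "inv k \<otimes> h \<in> gr_supp H b" using k(2) kc h by (auto simp: gr_supp_def)
  moreover have "h = k \<otimes> (inv k \<otimes> h)" using kc h by (simp add: m_assoc[symmetric])
  ultimately show "h \<in> (\<lambda>(k,h). k \<otimes> h) ` (gr_supp H a \<times> gr_supp H b)" using k(1) by force
qed

lemma gr_elem_mult:
  assumes H: "group H" and a: "gr_elem H a" and b: "gr_elem H b"
  shows "gr_elem H (gr_mult H a b)"
proof -
  have "finite ((\<lambda>(k,h). k \<otimes>\<^bsub>H\<^esub> h) ` (gr_supp H a \<times> gr_supp H b))"
    using a b by (simp add: gr_elem_def)
  then show ?thesis using supp_mult[OF H b, of a] finite_subset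
    by (auto simp: gr_elem_def gr_mult_def)
qed

lemma E_mult:
  fixes H :: "('h,'b) monoid_scheme" (structure)
  assumes H: "group H" and a: "gr_elem H a" and b: "gr_elem H b"
    and iota_mult: "\<And>x y. x \<in> carrier H \<Longrightarrow> y \<in> carrier H \<Longrightarrow> \<iota> (x \<otimes>\<^bsub>H\<^esub> y) = \<iota> x * \<iota> y"
    and iota_carrier: "\<And>x. x \<in> carrier H \<Longrightarrow> \<iota> x \<in> carrier_mat d d"
    and rc: "r < d" "c < d"
  shows "iota_ext H d \<iota> (gr_mult H a b) $$ (r,c) = (\<Sum>t<d. iota_ext H d \<iota> a $$ (r,t) * iota_ext H d \<iota> b $$ (t,c))"
proof -
  interpret group H by fact
  define SA where "SA = gr_supp H a"
  define SB where "SB = gr_supp H b"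
  define S where "S = (\<lambda>(k,h). k \<otimes> h) ` (SA \<times> SB)"
  have fSA: "finite SA" and fSB: "finite SB" using a b by (auto simp: gr_elem_def SA_def SB_def)
  have fS: "finite S" using fSA fSB by (simp add: S_def)
  have SAc: "SA \<subseteq> carrier H" and SBc: "SB \<subseteq> carrier H" by (auto simp: SA_def SB_def gr_supp_def)
  have Sc: "S \<subseteq> carrier H" using SAc SBc by (auto simp: S_def)
  have "iota_ext H d \<iota> (gr_mult H a b) $$ (r,c) = (\<Sum>h\<in>S. of_int (gr_mult H a b h) * \<iota> h $$ (r,c))"
    by (rule iota_ext_entry_gen) (use supp_mult[OF H b, of a] fS rc in \<open>auto simp: gr_mult_def S_def SA_def SB_def\<close>)
  also have "\<dots> = (\<Sum>h\<in>S. \<Sum>k\<in>SA. of_int (a k) * (of_int (b (inv k \<otimes> h)) * \<iota> h $$ (r,c)))"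
    using Sc by (intro sum.cong refl) (auto simp: gr_mult_def SA_def sum_distrib_right mult.assoc)
  also have "\<dots> = (\<Sum>k\<in>SA. of_int (a k) * (\<Sum>h\<in>S. of_int (b (inv k \<otimes> h)) * \<iota> h $$ (r,c)))"
    by (subst sum.swap) (simp add: sum_distrib_left)
  also have "\<dots> = (\<Sum>k\<in>SA. of_int (a k) * (\<Sum>h'\<in>SB. of_int (b h') * (\<Sum>t<d. \<iota> k $$ (r,t) * \<iota> h' $$ (t,c))))"
  proof (rule sum.cong[OF refl])
    fix k assume k: "k \<in> SA"
    have kc: "k \<in> carrier H" using k SAc by auto
    have "(\<Sum>h\<in>S. of_int (b (inv k \<otimes> h)) * \<iota> h $$ (r,c)) = (\<Sum>h\<in>(\<lambda>h'. k \<otimes> h') ` SB. of_int (b (inv k \<otimes> h)) * \<iota> h $$ (r,c))"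
    proof (rule sum.mono_neutral_right[OF fS])
      show "(\<lambda>h'. k \<otimes> h') ` SB \<subseteq> S" using k by (auto simp: S_def)
      show "\<forall>h\<in>S - (\<lambda>h'. k \<otimes> h') ` SB. of_int (b (inv k \<otimes> h)) * \<iota> h $$ (r, c) = 0"
      proof
        fix h assume h: "h \<in> S - (\<lambda>h'. k \<otimes> h') ` SB"
        have hc: "h \<in> carrier H" using h Sc by auto
        have "h = k \<otimes> (inv k \<otimes> h)" using kc hc by (simp add: m_assoc[symmetric])
        then have "inv k \<otimes> h \<notin> SB" using h by (metis DiffE image_eqI)
        then have "b (inv k \<otimes> h) = 0" using kc hc by (auto simp: SB_def gr_supp_def)
        then show "of_int (b (inv k \<otimes> h)) * \<iota> h $$ (r, c) = 0" by simp
      qed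
    qed
    also have "\<dots> = (\<Sum>h'\<in>SB. of_int (b (inv k \<otimes> (k \<otimes> h'))) * \<iota> (k \<otimes> h') $$ (r,c))"
      by (subst sum.reindex) (use kc SBc in \<open>auto simp: inj_on_def subset_iff\<close>)
    also have "\<dots> = (\<Sum>h'\<in>SB. of_int (b h') * (\<Sum>t<d. \<iota> k $$ (r,t) * \<iota> h' $$ (t,c)))"
    proof (intro sum.cong refl)
      fix h' assume "h' \<in> SB"
      then have hc: "h' \<in> carrier H" using SBc by auto
      have "inv k \<otimes> (k \<otimes> h') = h'" using kc hc by (simp add: m_assoc[symmetric])
      moreover have "\<iota> (k \<otimes> h') $$ (r,c) = (\<Sum>t<d. \<iota> k $$ (r,t) * \<iota> h' $$ (t,c))"
        using iota_mult[OF kc hc] mult_entry[OF iota_carrier[OF kc] iota_carrier[OF hc] rc] by simp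
      ultimately show "of_int (b (inv k \<otimes> (k \<otimes> h'))) * \<iota> (k \<otimes> h') $$ (r, c) = of_int (b h') * (\<Sum>t<d. \<iota> k $$ (r,t) * \<iota> h' $$ (t,c))"
        by simp
    qed
    finally show "of_int (a k) * (\<Sum>h\<in>S. of_int (b (inv k \<otimes> h)) * \<iota> h $$ (r,c)) = of_int (a k) * (\<Sum>h'\<in>SB. of_int (b h') * (\<Sum>t<d. \<iota> k $$ (r,t) * \<iota> h' $$ (t,c)))" by simp
  qed
  also have "\<dots> = (\<Sum>t<d. (\<Sum>k\<in>SA. of_int (a k) * \<iota> k $$ (r,t)) * (\<Sum>h'\<in>SB. of_int (b h') * \<iota> h' $$ (t,c)))"
  proof -
    have "(\<Sum>k\<in>SA. of_int (a k) * (\<Sum>h'\<in>SB. of_int (b h') * (\<Sum>t<d. \<iota> k $$ (r,t) * \<iota> h' $$ (t,c))))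
      = (\<Sum>k\<in>SA. \<Sum>h'\<in>SB. \<Sum>t<d. of_int (a k) * \<iota> k $$ (r,t) * (of_int (b h') * \<iota> h' $$ (t,c)))"
      by (simp add: sum_distrib_left mult_ac)
    also have "\<dots> = (\<Sum>k\<in>SA. \<Sum>t<d. \<Sum>h'\<in>SB. of_int (a k) * \<iota> k $$ (r,t) * (of_int (b h') * \<iota> h' $$ (t,c)))"
      by (intro sum.cong refl) (rule sum.swap)
    also have "\<dots> = (\<Sum>t<d. \<Sum>k\<in>SA. \<Sum>h'\<in>SB. of_int (a k) * \<iota> k $$ (r,t) * (of_int (b h') * \<iota> h' $$ (t,c)))"
      by (rule sum.swap)
    also have "\<dots> = (\<Sum>t<d. (\<Sum>k\<in>SA. of_int (a k) * \<iota> k $$ (r,t)) * (\<Sum>h'\<in>SB. of_int (b h') * \<iota> h' $$ (t,c)))"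
      by (simp add: sum_product)
    finally show ?thesis .
  qed
  also have "\<dots> = (\<Sum>t<d. iota_ext H d \<iota> a $$ (r,t) * iota_ext H d \<iota> b $$ (t,c))"
    using rc by (intro sum.cong refl) (simp add: iota_ext_entry SA_def SB_def)
  finally show ?thesis .
qed


lemma idx_bound:
  fixes k t N d :: nat
  assumes "k < N" "t < d" shows "k*d+t < N*d"
proof -
  have "k*d + t < k*d + d" using assms by simp
  also have "\<dots> = Suc k * d" by simp
  also have "\<dots> \<le> N*d" using assms by (intro mult_le_mono1) simp
  finally show ?thesis .
qed

lemma sum_div_mod:
  fixes N d :: nat
  shows "(\<Sum>s<N*d. f (s div d) (s mod d)) = (\<Sum>k<N. \<Sum>t<d. (f k t :: 'c :: comm_monoid_add))"
proof (cases "d = 0")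
  case True then show ?thesis by simp
next
  case False
  have "(\<Sum>k<N. \<Sum>t<d. f k t) = (\<Sum>(k,t)\<in>{..<N} \<times> {..<d}. f k t)"
    by (simp add: sum.cartesian_product)
  also have "\<dots> = (\<Sum>s<N*d. f (s div d) (s mod d))"
    apply (rule sum.reindex_bij_witness[where i="\<lambda>s. (s div d, s mod d)" and j="\<lambda>(k,t). k*d+t"])
    using False apply (auto simp: less_mult_imp_div_less idx_bound)
    done
  finally show ?thesis by simp
qed

lemma E_sumfun:
  assumes K: "finite K" and a: "\<And>k. k \<in> K \<Longrightarrow> gr_elem H (a k)" and rc: "r < d" "c < d"
  shows "iota_ext H d \<iota> (\<lambda>h. \<Sum>k\<in>K. a k h) $$ (r,c) = (\<Sum>k\<in>K. iota_ext H d \<iota> (a k) $$ (r,c))"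
proof -
  define T where "T = (\<Union>k\<in>K. gr_supp H (a k))"
  have fT: "finite T" using K a by (auto simp: T_def gr_elem_def)
  have "iota_ext H d \<iota> (\<lambda>h. \<Sum>k\<in>K. a k h) $$ (r,c) = (\<Sum>h\<in>T. of_int (\<Sum>k\<in>K. a k h) * \<iota> h $$ (r,c))"
  proof (rule iota_ext_entry_gen[OF _ fT _ rc])
    show "\<forall>h. h \<notin> carrier H \<longrightarrow> (\<Sum>k\<in>K. a k h) = 0" using a by (auto simp: gr_elem_def)
    show "gr_supp H (\<lambda>h. \<Sum>k\<in>K. a k h) \<subseteq> T"
    proof
      fix h assume "h \<in> gr_supp H (\<lambda>h. \<Sum>k\<in>K. a k h)"
      then have "h \<in> carrier H" "(\<Sum>k\<in>K. a k h) \<noteq> 0" by (auto simp: gr_supp_def)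
      then obtain k where "k \<in> K" "a k h \<noteq> 0" by (meson sum.neutral)
      then show "h \<in> T" using \<open>h \<in> carrier H\<close> by (auto simp: T_def gr_supp_def)
    qed
  qed
  also have "\<dots> = (\<Sum>k\<in>K. \<Sum>h\<in>T. of_int (a k h) * \<iota> h $$ (r,c))"
    by (simp add: sum_distrib_right sum.swap[of _ T])
  also have "\<dots> = (\<Sum>k\<in>K. iota_ext H d \<iota> (a k) $$ (r,c))"
  proof (rule sum.cong[OF refl])
    fix k assume k: "k \<in> K"
    show "(\<Sum>h\<in>T. of_int (a k h) * \<iota> h $$ (r,c)) = iota_ext H d \<iota> (a k) $$ (r,c)"
      by (rule iota_ext_entry_gen[symmetric, OF _ fT _ rc]) (use a[OF k] k in \<open>auto simp: gr_elem_def T_def\<close>)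
  qed
  finally show ?thesis .
qed

lemma block_mult:
  assumes H: "group H"
    and iota_mult: "\<And>x y. x \<in> carrier H \<Longrightarrow> y \<in> carrier H \<Longrightarrow> \<iota> (x \<otimes>\<^bsub>H\<^esub> y) = \<iota> x * \<iota> y"
    and iota_carrier: "\<And>x. x \<in> carrier H \<Longrightarrow> \<iota> x \<in> carrier_mat d d"
    and A: "\<And>i j. i < N \<Longrightarrow> j < N \<Longrightarrow> gr_elem H (A i j)"
    and B: "\<And>i j. i < N \<Longrightarrow> j < N \<Longrightarrow> gr_elem H (B i j)"
  shows "iota_block H N d \<iota> (gr_mat_mult H N A B) = iota_block H N d \<iota> A * iota_block H N d \<iota> B"
proof (rule eq_matI)
  show "dim_row (iota_block H N d \<iota> (gr_mat_mult H N A B)) = dim_row (iota_block H N d \<iota> A * iota_block H N d \<iota> B)"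
    by (simp add: iota_block_def)
  show "dim_col (iota_block H N d \<iota> (gr_mat_mult H N A B)) = dim_col (iota_block H N d \<iota> A * iota_block H N d \<iota> B)"
    by (simp add: iota_block_def)
  fix r c assume "r < dim_row (iota_block H N d \<iota> A * iota_block H N d \<iota> B)" "c < dim_col (iota_block H N d \<iota> A * iota_block H N d \<iota> B)"
  then have r: "r < N*d" and c: "c < N*d" by (auto simp: iota_block_def)
  then have d: "d > 0" by (cases d) auto
  define i where "i = r div d"
  define j where "j = c div d"
  have i: "i < N" and j: "j < N" using r c by (auto simp: i_def j_def less_mult_imp_div_less)
  have rm: "r mod d < d" and cm: "c mod d < d" using d by auto
  have "iota_block H N d \<iota> (gr_mat_mult H N A B) $$ (r,c)
      = iota_ext H d \<iota> (\<lambda>h. \<Sum>k<N. gr_mult H (A i k) (B k j) h) $$ (r mod d, c mod d)"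
    using r c i j by (simp add: iota_block_def gr_mat_mult_def i_def j_def)
  also have "\<dots> = (\<Sum>k<N. iota_ext H d \<iota> (gr_mult H (A i k) (B k j)) $$ (r mod d, c mod d))"
    by (rule E_sumfun) (use gr_elem_mult[OF H A B] i j rm cm in auto)
  also have "\<dots> = (\<Sum>k<N. \<Sum>t<d. iota_ext H d \<iota> (A i k) $$ (r mod d, t) * iota_ext H d \<iota> (B k j) $$ (t, c mod d))"
    by (rule sum.cong[OF refl]) (rule E_mult[OF H A B iota_mult iota_carrier rm cm], use i j in auto)
  also have "\<dots> = (\<Sum>s<N*d. iota_ext H d \<iota> (A i (s div d)) $$ (r mod d, s mod d) * iota_ext H d \<iota> (B (s div d) j) $$ (s mod d, c mod d))"
    by (rule sum_div_mod[symmetric])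
  also have "\<dots> = (\<Sum>s<N*d. iota_block H N d \<iota> A $$ (r,s) * iota_block H N d \<iota> B $$ (s,c))"
    using r c by (intro sum.cong refl) (simp add: iota_block_def i_def j_def)
  also have "\<dots> = (iota_block H N d \<iota> A * iota_block H N d \<iota> B) $$ (r,c)"
    by (rule mult_entry[symmetric]) (use r c in \<open>auto simp: iota_block_def\<close>)
  finally show "iota_block H N d \<iota> (gr_mat_mult H N A B) $$ (r,c) = (iota_block H N d \<iota> A * iota_block H N d \<iota> B) $$ (r,c)" .
qed

lemma supp_delta: "x \<in> carrier H \<Longrightarrow> gr_supp H (gr_delta H x) = {x}"
  by (auto simp: gr_supp_def gr_delta_def)

lemma gr_elem_delta: "x \<in> carrier H \<Longrightarrow> gr_elem H (gr_delta H x)"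
  unfolding gr_elem_def by (simp add: supp_delta) (simp add: gr_delta_def)

lemma gr_elem_zero: "gr_elem H (\<lambda>_. 0)"
  by (auto simp: gr_elem_def gr_supp_def)

lemma iota_ext_delta: "x \<in> carrier H \<Longrightarrow> \<iota> x \<in> carrier_mat d d \<Longrightarrow> iota_ext H d \<iota> (gr_delta H x) = \<iota> x"
  by (rule eq_matI) (simp_all add: iota_ext_def supp_delta, auto simp: gr_delta_def)

lemma iota_ext_zero: "iota_ext H d \<iota> (\<lambda>_. 0) = 0\<^sub>m d d"
  by (rule eq_matI) (auto simp: iota_ext_def gr_supp_def)

lemma block_entry:
  assumes "i < N" "j < N" "r < d" "c < d"
  shows "iota_block H N d \<iota> A $$ (i*d+r, j*d+c) = iota_ext H d \<iota> (A i j) $$ (r,c)"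
  using assms by (simp add: iota_block_def idx_bound)

lemma block_one:
  assumes "\<one>\<^bsub>H\<^esub> \<in> carrier H" "\<iota> \<one>\<^bsub>H\<^esub> = 1\<^sub>m d"
  shows "iota_block H N d \<iota> (gr_mat_one H N) = 1\<^sub>m (N*d)"
proof (rule eq_matI)
  fix r c assume "r < dim_row (1\<^sub>m (N*d))" "c < dim_col (1\<^sub>m (N*d))"
  then have r: "r < N*d" and c: "c < N*d" by auto
  then have d: "d > 0" by (cases d) auto
  have i: "r div d < N" and j: "c div d < N" using r c by (auto simp: less_mult_imp_div_less)
  have rm: "r mod d < d" and cm: "c mod d < d" using d by auto
  have eq: "(r = c) = (r div d = c div d \<and> r mod d = c mod d)"
    by (metis div_mult_mod_eq)
  show "iota_block H N d \<iota> (gr_mat_one H N) $$ (r,c) = 1\<^sub>m (N*d) $$ (r,c)"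
    using r c i j rm cm assms
    by (auto simp: iota_block_def gr_mat_one_def iota_ext_delta iota_ext_zero eq)
qed (auto simp: iota_block_def)

lemma mult_delta_one:
  fixes H (structure)
  assumes H: "group H" and a: "gr_elem H a"
  shows "gr_mult H a (gr_delta H \<one>) = a"
proof
  interpret group H by fact
  fix h
  show "gr_mult H a (gr_delta H \<one>) h = a h"
  proof (cases "h \<in> carrier H")
    case False then show ?thesis using a by (simp add: gr_mult_def gr_elem_def)
  next
    case True
    have ih: "inv x \<otimes> h = \<one> \<longleftrightarrow> x = h" if "x \<in> carrier H" for x
      using that True by (metis inv_closed inv_inv l_inv inv_equality)
    have "gr_mult H a (gr_delta H \<one>) h = (\<Sum>k\<in>gr_supp H a. if k = h then a k else 0)"
      unfolding gr_mult_def using True ih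
      by (auto intro!: sum.cong simp: gr_delta_def gr_supp_def)
    also have "\<dots> = a h" using True a by (auto simp: sum.delta gr_elem_def gr_supp_def)
    finally show ?thesis .
  qed
qed


theorem mainTheorem2:
  fixes GGr :: "('g, 'c) monoid_scheme"
    and G :: "('a, 'b) monoid_scheme"
    and phi :: "'g \<Rightarrow> 'a \<Rightarrow> 'a"
    and N d :: nat
    and Mat :: "'g \<Rightarrow> ('a \<times> ('a \<Rightarrow> 'a)) grmat"
    and \<iota> :: "'a \<times> ('a \<Rightarrow> 'a) \<Rightarrow> complex mat"
  defines "MG \<equiv> phi ` carrier GGr"
    and "KG \<equiv> Coset.kernel GGr (AutoGroup G) phi"
    and "H \<equiv> sdprod G (phi ` carrier GGr)"
    and "ZG \<equiv> {a. gr_elem (sdprod G (phi ` carrier GGr)) a \<and> gr_supp (sdprod G (phi ` carrier GGr)) a \<subseteq> carrier G \<times> {\<one>\<^bsub>AutoGroup G\<^esub>}}"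
    and "rhoG \<equiv> rhoGt G (sdprod G (phi ` carrier GGr)) N phi Mat"
    and "rhoV \<equiv> (\<lambda>f. iota_block (sdprod G (phi ` carrier GGr)) N d \<iota> (rhoGt G (sdprod G (phi ` carrier GGr)) N phi Mat f))"
  assumes Npos: "0 < N"
    and grpGG: "group GGr"
    and grpG: "group G"
    and phi_hom: "phi \<in> hom GGr (AutoGroup G)"
    and Mat_ZG: "\<And>f i j. f \<in> carrier GGr \<Longrightarrow> i < N \<Longrightarrow> j < N \<Longrightarrow> Mat f i j \<in> ZG"
    and rhoG_mult: "\<And>f h. f \<in> carrier GGr \<Longrightarrow> h \<in> carrier GGr \<Longrightarrow>
          rhoG (f \<otimes>\<^bsub>GGr\<^esub> h) = gr_mat_mult H N (rhoG f) (rhoG h)"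
    and rhoG_one: "rhoG \<one>\<^bsub>GGr\<^esub> = gr_mat_one H N"
    and iota_carrier: "\<And>x. x \<in> carrier H \<Longrightarrow> \<iota> x \<in> carrier_mat d d"
    and iota_mult: "\<And>x y. x \<in> carrier H \<Longrightarrow> y \<in> carrier H \<Longrightarrow> \<iota> (x \<otimes>\<^bsub>H\<^esub> y) = \<iota> x * \<iota> y"
    and iota_one: "\<iota> \<one>\<^bsub>H\<^esub> = 1\<^sub>m d"
  shows
    "(\<forall>f\<in>carrier GGr. rhoV f \<in> carrier_mat (N * d) (N * d) \<and> invertible_mat (rhoV f))
     \<and> (\<forall>f\<in>carrier GGr. \<forall>h\<in>carrier GGr. rhoV (f \<otimes>\<^bsub>GGr\<^esub> h) = rhoV f * rhoV h)
     \<and> rhoV \<one>\<^bsub>GGr\<^esub> = 1\<^sub>m (N * d)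
     \<and> ((\<forall>m\<in>MG. m \<noteq> \<one>\<^bsub>AutoGroup G\<^esub> \<longrightarrow>
            (\<forall>a\<in>ZG. iota_ext H d \<iota> (gr_delta H (\<one>\<^bsub>G\<^esub>, m)) \<noteq> iota_ext H d \<iota> a))
        \<longrightarrow> subgroup {f \<in> carrier GGr. rhoV f = 1\<^sub>m (N * d)} GGr
            \<and> {f \<in> carrier GGr. rhoV f = 1\<^sub>m (N * d)} \<subseteq> KG
            \<and> (inj_on (iota_ext H d \<iota>) ZG \<longrightarrow>
                 {f \<in> carrier GGr. rhoV f = 1\<^sub>m (N * d)} = {f \<in> carrier GGr. rhoG f = gr_mat_one H N}))"
proof -
  interpret GG: group GGr by (rule grpGG)
  interpret G: group G by (rule grpG)
  interpret A: group "AutoGroup G" by (rule G.AutoGroup)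
  interpret ph: group_hom GGr "AutoGroup G" phi
    using phi_hom by (simp add: group_hom_def group_hom_axioms_def GG.group_axioms A.group_axioms)
  have MGsub: "subgroup MG (AutoGroup G)" unfolding MG_def by (rule ph.img_is_subgroup)
  have Hgrp: "group H" unfolding H_def using sdprod_group[OF grpG MGsub[unfolded MG_def]] .
  have ZG_eq: "ZG = {a. gr_elem H a \<and> gr_supp H a \<subseteq> carrier G \<times> {\<one>\<^bsub>AutoGroup G\<^esub>}}"
    by (simp add: ZG_def H_def)
  have rhoV_eq: "rhoV f = iota_block H N d \<iota> (rhoG f)" for f
    by (simp add: rhoV_def rhoG_def H_def)
  have rhoG_eq: "rhoG f i j = gr_mult H (Mat f i j) (gr_delta H (\<one>\<^bsub>G\<^esub>, phi f))" if "i < N" "j < N" for f i j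
    using that by (simp add: rhoG_def rhoGt_def H_def)
  have carrH: "(g, m) \<in> carrier H \<longleftrightarrow> g \<in> carrier G \<and> m \<in> MG" for g m
    by (simp add: H_def sdprod_def MG_def)
  have phiMG: "phi f \<in> MG" if "f \<in> carrier GGr" for f using that by (simp add: MG_def)
  have oneH: "\<one>\<^bsub>H\<^esub> = (\<one>\<^bsub>G\<^esub>, \<one>\<^bsub>AutoGroup G\<^esub>)" by (simp add: H_def sdprod_def auto_one)
  have oneHc: "\<one>\<^bsub>H\<^esub> \<in> carrier H" by (rule monoid.one_closed[OF group.is_monoid[OF Hgrp]])
  have ent: "gr_elem H (rhoG f i j)" if "f \<in> carrier GGr" "i < N" "j < N" for f i j
  proof -
    have "gr_elem H (Mat f i j)" using Mat_ZG[OF that] ZG_eq by auto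
    moreover have "gr_elem H (gr_delta H (\<one>\<^bsub>G\<^esub>, phi f))"
      by (rule gr_elem_delta) (simp add: carrH phiMG that)
    ultimately show ?thesis using rhoG_eq[OF that(2,3)] gr_elem_mult[OF Hgrp] by simp
  qed
  have Vmult: "rhoV (f \<otimes>\<^bsub>GGr\<^esub> h) = rhoV f * rhoV h" if "f \<in> carrier GGr" "h \<in> carrier GGr" for f h
    unfolding rhoV_eq rhoG_mult[OF that]
    by (rule block_mult[OF Hgrp iota_mult iota_carrier]) (use ent that in auto)
  have Vone: "rhoV \<one>\<^bsub>GGr\<^esub> = 1\<^sub>m (N * d)"
    unfolding rhoV_eq rhoG_one by (rule block_one[where H=H and \<iota>=\<iota> and d=d, OF oneHc iota_one])
  have Vcarr: "rhoV f \<in> carrier_mat (N * d) (N * d)" for f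
    by (simp add: rhoV_eq iota_block_def)
  have Vinv: "invertible_mat (rhoV f)" if f: "f \<in> carrier GGr" for f
  proof -
    have "rhoV f * rhoV (inv\<^bsub>GGr\<^esub> f) = 1\<^sub>m (N * d)"
      using Vmult[OF f GG.inv_closed[OF f]] Vone f by simp
    moreover have "rhoV (inv\<^bsub>GGr\<^esub> f) * rhoV f = 1\<^sub>m (N * d)"
      using Vmult[OF GG.inv_closed[OF f] f] Vone f by simp
    ultimately show ?thesis using Vcarr[of f] Vcarr[of "inv\<^bsub>GGr\<^esub> f"]
      unfolding invertible_mat_def inverts_mat_def square_mat.simps by auto
  qed
  have Vblock00: "iota_ext H d \<iota> (rhoG f i j) = iota_ext H d \<iota> (gr_mat_one H N i j)"
    if f: "f \<in> carrier GGr" "rhoV f = 1\<^sub>m (N * d)" and ij: "i < N" "j < N" for f i j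
  proof (rule eq_matI)
    fix r c assume "r < dim_row (iota_ext H d \<iota> (gr_mat_one H N i j))" "c < dim_col (iota_ext H d \<iota> (gr_mat_one H N i j))"
    then have rc: "r < d" "c < d" by (auto simp: iota_ext_def)
    have "iota_ext H d \<iota> (rhoG f i j) $$ (r,c) = rhoV f $$ (i*d+r, j*d+c)"
      using block_entry[OF ij rc, where H=H and \<iota>=\<iota> and A="rhoG f"] rhoV_eq by simp
    also have "\<dots> = iota_block H N d \<iota> (gr_mat_one H N) $$ (i*d+r, j*d+c)"
      using f Vone rhoV_eq by (simp add: rhoG_one)
    also have "\<dots> = iota_ext H d \<iota> (gr_mat_one H N i j) $$ (r,c)"
      using block_entry[OF ij rc, where H=H and \<iota>=\<iota> and A="gr_mat_one H N"] by simp
    finally show "iota_ext H d \<iota> (rhoG f i j) $$ (r,c) = iota_ext H d \<iota> (gr_mat_one H N i j) $$ (r,c)" .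
  qed (auto simp: iota_ext_def)
  have ker_sub: "phi f = \<one>\<^bsub>AutoGroup G\<^esub>"
    if hyp: "\<forall>m\<in>MG. m \<noteq> \<one>\<^bsub>AutoGroup G\<^esub> \<longrightarrow>
            (\<forall>a\<in>ZG. iota_ext H d \<iota> (gr_delta H (\<one>\<^bsub>G\<^esub>, m)) \<noteq> iota_ext H d \<iota> a)"
      and f: "f \<in> carrier GGr" "rhoV f = 1\<^sub>m (N * d)" for f
  proof -
    define m where "m = inv\<^bsub>AutoGroup G\<^esub> (phi f)"
    have pf: "phi f \<in> carrier (AutoGroup G)" using f(1) by simp
    have mMG: "m \<in> MG" using subgroup.m_inv_closed[OF MGsub phiMG[OF f(1)]] m_def by simp
    have mA: "m \<in> carrier (AutoGroup G)" using pf m_def by simp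
    define x where "x = (\<one>\<^bsub>G\<^esub>, phi f)"
    define y where "y = (\<one>\<^bsub>G\<^esub>, m)"
    have xc: "x \<in> carrier H" using x_def carrH phiMG[OF f(1)] by simp
    have yc: "y \<in> carrier H" using y_def carrH mMG by simp
    have "phi f \<in> hom G G" using pf by (simp add: auto_carrier auto_def)
    then have pf1: "phi f \<one>\<^bsub>G\<^esub> = \<one>\<^bsub>G\<^esub>" using hom_one grpG by blast
    have "compose (carrier G) (phi f) m = \<one>\<^bsub>AutoGroup G\<^esub>"
      using auto_mult[of "phi f" G m] pf mA auto_carrier[of G] m_def A.r_inv[OF pf] by simp
    then have xy: "x \<otimes>\<^bsub>H\<^esub> y = \<one>\<^bsub>H\<^esub>"
      using pf1 by (simp add: x_def y_def H_def sdprod_def auto_one)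
    define M0 where "M0 = Mat f 0 0"
    have M0ZG: "M0 \<in> ZG" using Mat_ZG[OF f(1) Npos Npos] M0_def by simp
    have M0e: "gr_elem H M0" using M0ZG ZG_eq by auto
    define X where "X = iota_ext H d \<iota> M0"
    have Xc: "X \<in> carrier_mat d d" by (simp add: X_def iota_ext_carrier)
    have "iota_ext H d \<iota> (rhoG f 0 0) = X * \<iota> x"
    proof (rule eq_matI)
      fix r c assume "r < dim_row (X * \<iota> x)" "c < dim_col (X * \<iota> x)"
      then have rc: "r < d" "c < d" using Xc iota_carrier[OF xc] by auto
      have "iota_ext H d \<iota> (rhoG f 0 0) $$ (r,c) = iota_ext H d \<iota> (gr_mult H M0 (gr_delta H x)) $$ (r,c)"
        using rhoG_eq[OF Npos Npos] by (simp add: M0_def x_def)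
      also have "\<dots> = (\<Sum>t<d. X $$ (r,t) * iota_ext H d \<iota> (gr_delta H x) $$ (t,c))"
        unfolding X_def by (rule E_mult[OF Hgrp M0e gr_elem_delta[OF xc] iota_mult iota_carrier rc])
      also have "\<dots> = (X * \<iota> x) $$ (r,c)"
        using mult_entry[OF Xc iota_carrier[OF xc] rc] iota_ext_delta[where H=H and \<iota>=\<iota>, OF xc iota_carrier[OF xc]] by simp
      finally show "iota_ext H d \<iota> (rhoG f 0 0) $$ (r,c) = (X * \<iota> x) $$ (r,c)" .
    qed (use Xc iota_carrier[OF xc] in \<open>auto simp: iota_ext_def\<close>)
    moreover have "iota_ext H d \<iota> (rhoG f 0 0) = 1\<^sub>m d"
      using Vblock00[OF f Npos Npos] by (simp add: gr_mat_one_def Npos iota_ext_delta[where H=H and \<iota>=\<iota>, OF oneHc iota_carrier[OF oneHc]] iota_one)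
    ultimately have Xx: "X * \<iota> x = 1\<^sub>m d" by simp
    have "X = X * (\<iota> x * \<iota> y)"
      using iota_mult[OF xc yc] xy iota_one Xc by (metis right_mult_one_mat)
    also have "\<dots> = (X * \<iota> x) * \<iota> y"
      using Xc iota_carrier[OF xc] iota_carrier[OF yc] by simp
    also have "\<dots> = \<iota> y" using Xx iota_carrier[OF yc] by simp
    also have "\<dots> = iota_ext H d \<iota> (gr_delta H (\<one>\<^bsub>G\<^esub>, m))"
      using iota_ext_delta[where H=H and \<iota>=\<iota>, OF yc iota_carrier[OF yc]] y_def by simp
    finally have "iota_ext H d \<iota> (gr_delta H (\<one>\<^bsub>G\<^esub>, m)) = iota_ext H d \<iota> M0" by (simp add: X_def)
    then have "m = \<one>\<^bsub>AutoGroup G\<^esub>" using hyp mMG M0ZG by blast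
    then show ?thesis using m_def pf by simp
  qed
  have part1: "(\<forall>f\<in>carrier GGr. rhoV f \<in> carrier_mat (N * d) (N * d) \<and> invertible_mat (rhoV f))"
    using Vcarr Vinv by blast
  have part2: "\<forall>f\<in>carrier GGr. \<forall>h\<in>carrier GGr. rhoV (f \<otimes>\<^bsub>GGr\<^esub> h) = rhoV f * rhoV h"
    using Vmult by blast
  have part4: "subgroup {f \<in> carrier GGr. rhoV f = 1\<^sub>m (N * d)} GGr
            \<and> {f \<in> carrier GGr. rhoV f = 1\<^sub>m (N * d)} \<subseteq> KG
            \<and> (inj_on (iota_ext H d \<iota>) ZG \<longrightarrow>
                 {f \<in> carrier GGr. rhoV f = 1\<^sub>m (N * d)} = {f \<in> carrier GGr. rhoG f = gr_mat_one H N})"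
    if hyp: "\<forall>m\<in>MG. m \<noteq> \<one>\<^bsub>AutoGroup G\<^esub> \<longrightarrow>
            (\<forall>a\<in>ZG. iota_ext H d \<iota> (gr_delta H (\<one>\<^bsub>G\<^esub>, m)) \<noteq> iota_ext H d \<iota> a)"
  proof (intro conjI impI)
    show "subgroup {f \<in> carrier GGr. rhoV f = 1\<^sub>m (N * d)} GGr"
    proof (rule GG.subgroupI)
      show "{f \<in> carrier GGr. rhoV f = 1\<^sub>m (N * d)} \<noteq> {}" using Vone by blast
    next
      fix a assume a: "a \<in> {f \<in> carrier GGr. rhoV f = 1\<^sub>m (N * d)}"
      then have "rhoV (a \<otimes>\<^bsub>GGr\<^esub> inv\<^bsub>GGr\<^esub> a) = rhoV (inv\<^bsub>GGr\<^esub> a)"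
        using Vmult[of a "inv\<^bsub>GGr\<^esub> a"] Vcarr[of "inv\<^bsub>GGr\<^esub> a"] by (auto simp del: GG.r_inv)
      then show "inv\<^bsub>GGr\<^esub> a \<in> {f \<in> carrier GGr. rhoV f = 1\<^sub>m (N * d)}"
        using a Vone by auto
    next
      fix a b assume "a \<in> {f \<in> carrier GGr. rhoV f = 1\<^sub>m (N * d)}" "b \<in> {f \<in> carrier GGr. rhoV f = 1\<^sub>m (N * d)}"
      then show "a \<otimes>\<^bsub>GGr\<^esub> b \<in> {f \<in> carrier GGr. rhoV f = 1\<^sub>m (N * d)}"
        using Vmult[of a b] by auto
    qed auto
  next
    show "{f \<in> carrier GGr. rhoV f = 1\<^sub>m (N * d)} \<subseteq> KG"
      using ker_sub[OF hyp] by (auto simp: KG_def kernel_def)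
  next
    assume inj: "inj_on (iota_ext H d \<iota>) ZG"
    show "{f \<in> carrier GGr. rhoV f = 1\<^sub>m (N * d)} = {f \<in> carrier GGr. rhoG f = gr_mat_one H N}"
    proof (rule equalityI[rotated]; rule subsetI)
      fix f assume "f \<in> {f \<in> carrier GGr. rhoG f = gr_mat_one H N}"
      then show "f \<in> {f \<in> carrier GGr. rhoV f = 1\<^sub>m (N * d)}"
        using Vone rhoV_eq rhoG_one by auto
    next
      fix f assume "f \<in> {f \<in> carrier GGr. rhoV f = 1\<^sub>m (N * d)}"
      then have f: "f \<in> carrier GGr" "rhoV f = 1\<^sub>m (N * d)" by auto
      have pf: "phi f = \<one>\<^bsub>AutoGroup G\<^esub>" by (rule ker_sub[OF hyp f])
      have "rhoG f i j = gr_mat_one H N i j" for i j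
      proof (cases "i < N \<and> j < N")
        case False then show ?thesis by (auto simp: rhoG_def rhoGt_def gr_mat_one_def)
      next
        case True
        have Me: "Mat f i j \<in> ZG" using Mat_ZG f True by auto
        have r1: "rhoG f i j = Mat f i j"
          using rhoG_eq[of i j f] True pf oneH mult_delta_one[OF Hgrp] Me ZG_eq by auto
        have oZG: "gr_mat_one H N i j \<in> ZG"
        proof (cases "i = j")
          case True
          then have "gr_mat_one H N i j = gr_delta H \<one>\<^bsub>H\<^esub>" using \<open>i < N \<and> j < N\<close> by (simp add: gr_mat_one_def)
          then show ?thesis using gr_elem_delta[OF oneHc] supp_delta[OF oneHc] oneH ZG_eq by auto
        next
          case False
          then have "gr_mat_one H N i j = (\<lambda>_. 0)" by (simp add: gr_mat_one_def)
          then show ?thesis using gr_elem_zero ZG_eq by (auto simp: gr_supp_def)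
        qed
        show ?thesis
          using inj Vblock00[OF f True[THEN conjunct1] True[THEN conjunct2]] r1 Me oZG
          unfolding inj_on_def by simp
      qed
      then show "f \<in> {f \<in> carrier GGr. rhoG f = gr_mat_one H N}" using f by auto
    qed
  qed
  show ?thesis using part1 part2 Vone part4 by blast
qed


end
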